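(* Let $g\in H(\mathbb D)$, $\alpha\geq0$ and $\beta>0$. Then $S_g: H^{\infty}_\alpha\rightarrow H^{\infty}_\beta$ is bounded if and only if $$\sup_{z\in\mathbb D}(1-|z|^2)^{\beta-\alpha}|g(z)|<\infty\,.$$
   Context: $\mathbb D$ is the open unit disk and $H(\mathbb D)$ the space of analytic functions on $\mathbb D$. For $\alpha\geq0$, $H^{\infty}_\alpha=\{f\in H(\mathbb D): \|f\|_{H^\infty_\alpha}:=\sup_{z\in\mathbb D}(1-|z|^2)^\alpha|f(z)|<\infty\}$. For $g\in H(\mathbb D)$, $(S_gf)(z)=\int_0^z f'(\omega)g(\omega)\,d\omega$. *)

theory Defs
  imports "HOL-Complex_Analysis.Complex_Analysis"
begin

abbreviation unit_disk :: "complex set" where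
  "unit_disk \<equiv> ball 0 1"

definition weight :: "real \<Rightarrow> complex \<Rightarrow> real" where
  "weight a z = (1 - (norm z)^2) powr a"

definition Hinf :: "real \<Rightarrow> (complex \<Rightarrow> complex) set" where
  "Hinf a = {f. f holomorphic_on unit_disk \<and>
      (\<exists>C. \<forall>z\<in>unit_disk. weight a z * norm (f z) \<le> C)}"

definition Hinf_norm :: "real \<Rightarrow> (complex \<Rightarrow> complex) \<Rightarrow> real" where
  "Hinf_norm a f = (SUP z\<in>unit_disk. weight a z * norm (f z))"

definition S_op :: "(complex \<Rightarrow> complex) \<Rightarrow> (complex \<Rightarrow> complex) \<Rightarrow> complex \<Rightarrow> complex" where
  "S_op g f z = contour_integral (linepath 0 z) (\<lambda>w. deriv f w * g w)"

definition S_bounded :: "(complex \<Rightarrow> complex) \<Rightarrow> real \<Rightarrow> real \<Rightarrow> bool" where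
  "S_bounded g a b \<longleftrightarrow> (\<exists>C. \<forall>f\<in>Hinf a.
      S_op g f \<in> Hinf b \<and> Hinf_norm b (S_op g f) \<le> C * Hinf_norm a f)"

end

theory Submission
  imports Defs
begin


lemma prim:
  fixes h :: "complex \<Rightarrow> complex"
  assumes h: "h holomorphic_on unit_disk" and z: "z \<in> unit_disk"
  shows "((\<lambda>z. contour_integral (linepath 0 z) h) has_field_derivative h z) (at z)"
proof (rule triangle_contour_integrals_starlike_primitive[where S=unit_disk])
  show "continuous_on unit_disk h" using h holomorphic_on_imp_continuous_on by blast
  show "\<And>y. y \<in> unit_disk \<Longrightarrow> closed_segment 0 y \<subseteq> unit_disk"
    by (simp add: closed_segment_subset convex_ball)
  fix b c assume bc: "closed_segment b c \<subseteq> unit_disk"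
  have "(h has_contour_integral 0) (linepath 0 b +++ linepath b c +++ linepath c 0)"
  proof (rule Cauchy_theorem_convex_simple[OF h convex_ball])
    have "b \<in> unit_disk" "c \<in> unit_disk" using bc ends_in_segment by blast+
    then have "closed_segment 0 b \<subseteq> unit_disk" "closed_segment c 0 \<subseteq> unit_disk"
      by (simp_all add: closed_segment_subset)
    then show "path_image (linepath 0 b +++ linepath b c +++ linepath c 0) \<subseteq> unit_disk"
      using bc by (simp add: path_image_join)
  qed auto
  then show "contour_integral (linepath 0 b) h + contour_integral (linepath b c) h +
                       contour_integral (linepath c 0) h = 0"
    by (rule has_chain_integral_chain_integral3)
qed (use z in auto)




lemma deriv_est:
  fixes F :: "complex \<Rightarrow> complex"
  assumes F: "F holomorphic_on unit_disk" and a: "a \<ge> 0"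
    and M: "\<forall>z\<in>unit_disk. weight a z * norm (F z) \<le> M" and w: "w \<in> unit_disk"
  shows "(1 - norm w ^ 2) powr (a+1) * norm (deriv F w) \<le> 4 powr (a+1) * M"
proof -
  have M0: "0 \<le> M" using M[rule_format, of 0] by (simp add: weight_def) (meson norm_ge_zero order_trans)
  define r where "r = (1 - norm w) / 2"
  have w1: "norm w < 1" using w by simp
  have r0: "0 < r" using w1 by (simp add: r_def)
  have sub: "cball w r \<subseteq> unit_disk"
  proof
    fix x assume "x \<in> cball w r"
    then have "norm x \<le> norm w + r" using norm_triangle_sub[of x w]
      by (simp add: dist_norm norm_minus_commute) 
    then show "x \<in> unit_disk" using w1 unfolding r_def by (simp add: field_simps)
  qed
  have bnd: "norm (F x) \<le> M / r powr a" if x: "norm (w - x) = r" for x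
  proof -
    have xd: "x \<in> unit_disk" using sub x by (auto simp: dist_norm)
    have "norm x \<le> norm w + r" using norm_triangle_sub[of x w] x
      by (simp add: norm_minus_commute) 
    then have nx: "norm x \<le> 1 - r" unfolding r_def by (simp add: field_simps)
    have "norm x * norm x \<le> 1 * norm x" using xd by (intro mult_right_mono) auto
    then have "norm x ^ 2 \<le> norm x" by (simp add: power2_eq_square)
    then have "r \<le> 1 - norm x ^ 2" using nx by linarith
    then have "r powr a \<le> weight a x" unfolding weight_def
      using r0 a by (intro powr_mono2) auto
    then have "r powr a * norm (F x) \<le> M"
      using M xd by (meson mult_right_mono norm_ge_zero order_trans)
    then show ?thesis using r0 by (simp add: field_simps)
  qed
  have "norm ((deriv ^^ 1) F w) \<le> fact 1 * (M / r powr a) / r ^ 1"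
    apply (rule Cauchy_inequality[OF _ _ r0])
    using holomorphic_on_subset[OF F] sub ball_subset_cball
      apply blast
    using holomorphic_on_imp_continuous_on[OF holomorphic_on_subset[OF F sub]] apply simp
    using bnd by blast
  then have d: "norm (deriv F w) \<le> M / r powr (a+1)"
    using r0 by (simp add: powr_add field_simps)
  have "0 \<le> (norm w - 1)^2" by simp
  moreover have "(norm w - 1)^2 = norm w^2 + 1 - 2 * norm w" by (simp add: power2_diff)
  ultimately have "1 - norm w ^ 2 \<le> 2 - 2 * norm w" by linarith
  also have "\<dots> = 4 * r" by (simp add: r_def)
  finally have "1 - norm w ^ 2 \<le> 4 * r" .
  then have "(1 - norm w ^ 2) powr (a+1) \<le> (4*r) powr (a+1)"
    using w1 a by (intro powr_mono2) (auto simp: power_le_one)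
  also have "\<dots> = 4 powr (a+1) * r powr (a+1)" using r0 by (simp add: powr_mult)
  finally have e: "(1 - norm w ^ 2) powr (a+1) \<le> 4 powr (a+1) * r powr (a+1)" .
  have "(1 - norm w ^ 2) powr (a+1) * norm (deriv F w) \<le> 4 powr (a+1) * r powr (a+1) * (M / r powr (a+1))"
    using e d by (intro mult_mono) auto
  also have "\<dots> = 4 powr (a+1) * M" using r0 by simp
  finally show ?thesis .
qed




lemma growth:
  fixes F h :: "complex \<Rightarrow> complex"
  assumes F0: "F 0 = 0" and dF: "\<And>w. w \<in> unit_disk \<Longrightarrow> (F has_field_derivative h w) (at w)"
    and hb: "\<And>w. w \<in> unit_disk \<Longrightarrow> (1 - norm w) powr (\<beta>+1) * norm (h w) \<le> C0"
    and b: "\<beta> > 0" and z: "z \<in> unit_disk"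
  shows "norm (F z) \<le> C0 / \<beta> * (1 - norm z) powr (-\<beta>)"
proof -
  have C0: "0 \<le> C0" using hb[of 0] by simp (meson norm_ge_zero order_trans)
  have nz: "norm z < 1" using z by simp
  define f where "f = (\<lambda>t::real. F (t *\<^sub>R z))"
  define \<phi> where "\<phi> = (\<lambda>t::real. C0 / \<beta> * (1 - t * norm z) powr (-\<beta>))"
  have inD: "t *\<^sub>R z \<in> unit_disk" if "0 \<le> t" "t \<le> 1" for t
  proof -
    have "norm (t *\<^sub>R z) = t * norm z" using that by simp
    also have "\<dots> \<le> 1 * norm z" using that by (intro mult_right_mono) auto
    finally show ?thesis using nz by simp
  qed
  have pos: "0 < 1 - t * norm z" if "0 \<le> t" "t \<le> 1" for t
  proof -
    have "t * norm z \<le> 1 * norm z" using that by (intro mult_right_mono) auto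
    then show ?thesis using nz by simp
  qed
  have fd: "(f has_vector_derivative (z * h (t *\<^sub>R z))) (at t)" if "0 \<le> t" "t \<le> 1" for t
  proof -
    have "((\<lambda>t. t *\<^sub>R z) has_vector_derivative z) (at t)"
      by (auto intro!: derivative_eq_intros)
    from field_vector_diff_chain_at[OF this dF[OF inD[OF that]]]
    show ?thesis by (simp add: f_def o_def)
  qed
  have \<phi>d: "(\<phi> has_vector_derivative (C0 * norm z * (1 - t * norm z) powr (-\<beta> - 1))) (at t)"
    if "0 \<le> t" "t \<le> 1" for t
  proof -
    have "((\<lambda>t. (1 - t * norm z) powr (-\<beta>)) has_real_derivative
            (-\<beta>) * (1 - t * norm z) powr (-\<beta> - of_nat 1) * (- norm z)) (at t)"
      by (rule DERIV_fun_powr[of "\<lambda>t. 1 - t * norm z", OF _ pos[OF that]]) (auto intro!: derivative_eq_intros)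
    then have "(\<phi> has_real_derivative C0 / \<beta> * ((-\<beta>) * (1 - t * norm z) powr (-\<beta> - of_nat 1) * (- norm z))) (at t)"
      unfolding \<phi>_def by (rule DERIV_cmult)
    then show ?thesis using b by (simp add: has_real_derivative_iff_has_vector_derivative[symmetric] mult_ac)
  qed
  have "continuous_on {0..1} f"
  proof (rule continuous_at_imp_continuous_on, rule ballI)
    fix t :: real assume "t \<in> {0..1}"
    then show "isCont f t" using fd[of t] 
      by (auto intro: has_vector_derivative_continuous)
  qed
  moreover have "continuous_on {0..1} \<phi>"
  proof (rule continuous_at_imp_continuous_on, rule ballI)
    fix t :: real assume "t \<in> {0..1}"
    then show "isCont \<phi> t" using \<phi>d[of t] 
      by (auto intro: has_vector_derivative_continuous)
  qed
  moreover have "norm (z * h (t *\<^sub>R z)) \<le> C0 * norm z * (1 - t * norm z) powr (-\<beta> - 1)"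
    if "0 < t" "t < 1" for t
  proof -
    have w: "t *\<^sub>R z \<in> unit_disk" using inD that by auto
    have nw: "norm (t *\<^sub>R z) = t * norm z" using that by simp
    have p: "0 < 1 - t * norm z" using pos that by auto
    have "(1 - t * norm z) powr (\<beta>+1) * norm (h (t *\<^sub>R z)) \<le> C0" using hb[OF w] unfolding nw .
    then have "norm (h (t *\<^sub>R z)) \<le> C0 / (1 - t * norm z) powr (\<beta>+1)"
      using p by (simp add: field_simps)
    also have "\<dots> = C0 * (1 - t * norm z) powr (-\<beta> - 1)"
    proof -
      have eq: "- \<beta> - 1 = -(\<beta>+1)" by simp
      show ?thesis by (simp only: eq powr_minus divide_inverse)
    qed
    finally have "norm (h (t *\<^sub>R z)) \<le> C0 * (1 - t * norm z) powr (-\<beta> - 1)" .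
    then have "norm z * norm (h (t *\<^sub>R z)) \<le> norm z * (C0 * (1 - t * norm z) powr (-\<beta> - 1))"
      by (intro mult_left_mono) auto
    then show ?thesis by (simp add: norm_mult mult_ac)
  qed
  ultimately have "norm (f 1 - f 0) \<le> \<phi> 1 - \<phi> 0"
    using fd \<phi>d by (intro differentiable_bound_general[OF zero_less_one, of f \<phi> "\<lambda>t. z * h (t *\<^sub>R z)" "\<lambda>t. C0 * norm z * (1 - t * norm z) powr (-\<beta> - 1)"]) auto
  then have "norm (F z) \<le> C0 / \<beta> * (1 - norm z) powr (-\<beta>) - C0 / \<beta>"
    by (simp add: f_def \<phi>_def F0)
  also have "\<dots> \<le> C0 / \<beta> * (1 - norm z) powr (-\<beta>)" using C0 b by simp
  finally show ?thesis .
qed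




lemma moeb:
  fixes a z :: complex
  assumes "norm a < 1" "norm z < 1"
  shows "norm (a - z) \<le> norm (1 - cnj a * z)"
proof -
  have e: "norm (1 - cnj a * z)^2 - norm (a - z)^2 = (1 - norm a^2)*(1 - norm z^2)"
    by (simp only: cmod_power2) (simp add: algebra_simps power2_eq_square)
  have "0 \<le> (1 - norm a^2)*(1 - norm z^2)" using assms
    by (intro mult_nonneg_nonneg) (auto simp: power_le_one)
  then have "norm (a - z)^2 \<le> norm (1 - cnj a * z)^2" using e by linarith
  then show ?thesis by (rule power2_le_imp_le) simp
qed

lemma u_pos:
  fixes a z :: complex
  assumes "norm a < 1" "norm z < 1"
  shows "0 < Re (1 - cnj a * z)" "1 - norm z \<le> norm (1 - cnj a * z)"
proof -
  have "norm (cnj a * z) = norm a * norm z" by (simp add: norm_mult)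
  also have "\<dots> \<le> 1 * norm z" using assms by (intro mult_right_mono) auto
  finally have n: "norm (cnj a * z) \<le> norm z" by simp
  have "Re (cnj a * z) \<le> norm (cnj a * z)" by (rule complex_Re_le_cmod)
  then show "0 < Re (1 - cnj a * z)" using n assms by simp
  have "1 - norm (cnj a * z) \<le> norm (1 - cnj a * z)"
    using norm_triangle_ineq2[of 1 "cnj a * z"] by simp
  then show "1 - norm z \<le> norm (1 - cnj a * z)" using n by linarith
qed

lemma tf_deriv:
  fixes a z :: complex and p :: complex
  assumes "norm a < 1" "norm z < 1"
  shows "((\<lambda>z. (a - z) * (1 - cnj a * z) powr p) has_field_derivative
     (- ((1 - cnj a * z) powr p) + (a - z) * (p * (1 - cnj a * z) powr (p - 1) * (- cnj a)))) (at z)"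
proof -
  have nr: "1 - cnj a * z \<notin> \<real>\<^sub>\<le>\<^sub>0" using u_pos(1)[OF assms]
    by (auto simp: complex_nonpos_Reals_iff)
  have d1: "((\<lambda>z. (1 - cnj a * z) powr p) has_field_derivative
            (p * (1 - cnj a * z) powr (p - 1) * (- cnj a))) (at z)"
  proof -
    have g: "((\<lambda>z. 1 - cnj a * z) has_field_derivative (- cnj a)) (at z)"
      by (auto intro!: derivative_eq_intros)
    show ?thesis
      using DERIV_chain2[of "\<lambda>w. w powr p" _ "\<lambda>z. 1 - cnj a * z", OF has_field_derivative_powr[OF nr, of p] g]
      by simp
  qed
  have d0: "((\<lambda>z. a - z) has_field_derivative -1) (at z)"
    by (auto intro!: derivative_eq_intros)
  show ?thesis
    by (rule DERIV_cong[OF DERIV_mult[OF d0 d1]]) (simp add: algebra_simps)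
qed




lemma tf_bound:
  fixes a z :: complex and \<alpha> :: real
  assumes al: "\<alpha> \<ge> 0" and a: "norm a < 1" and z: "norm z < 1"
  shows "weight \<alpha> z * norm ((a - z) * (1 - cnj a * z) powr (-(of_real \<alpha> + 1))) \<le> 2 powr \<alpha>"
proof -
  define u where "u = 1 - cnj a * z"
  have up: "0 < norm u" using u_pos(1)[OF a z] unfolding u_def
    by (metis norm_zero zero_complex.sel(1) less_irrefl zero_less_norm_iff)
  have ul: "1 - norm z \<le> norm u" using u_pos(2)[OF a z] by (simp add: u_def)
  have nu: "norm (u powr (-(of_real \<alpha> + 1))) = norm u powr (-(\<alpha> + 1))"
    by (subst norm_powr_real_powr') auto
  have "norm ((a - z) * u powr (-(of_real \<alpha> + 1))) \<le> norm u * norm u powr (-(\<alpha> + 1))"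
    unfolding norm_mult nu using moeb[OF a z] by (intro mult_right_mono) (auto simp: u_def)
  also have "\<dots> = norm u powr (-\<alpha>)"
  proof -
    have "norm u * norm u powr (-(\<alpha> + 1)) = norm u powr 1 * norm u powr (-(\<alpha> + 1))" using up by simp
    also have "\<dots> = norm u powr (1 + -(\<alpha> + 1))" by (rule powr_add[symmetric])
    finally show ?thesis by simp
  qed
  finally have f: "norm ((a - z) * u powr (-(of_real \<alpha> + 1))) \<le> norm u powr (-\<alpha>)" .
  have "0 \<le> (norm z - 1)^2" by simp
  moreover have "(norm z - 1)^2 = norm z^2 + 1 - 2 * norm z" by (simp add: power2_diff)
  ultimately have "1 - norm z ^ 2 \<le> 2 - 2 * norm z" by linarith
  also have "\<dots> \<le> 2 * norm u" using ul by simp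
  finally have "1 - norm z ^ 2 \<le> 2 * norm u" .
  then have w: "weight \<alpha> z \<le> (2 * norm u) powr \<alpha>"
    unfolding weight_def using z al by (intro powr_mono2) (auto simp: power_le_one)
  have "weight \<alpha> z * norm ((a - z) * u powr (-(of_real \<alpha> + 1))) \<le> (2 * norm u) powr \<alpha> * norm u powr (-\<alpha>)"
    using w f by (intro mult_mono) (auto simp: weight_def)
  also have "\<dots> = 2 powr \<alpha>" using up by (simp add: powr_mult powr_minus)
  finally show ?thesis by (simp add: u_def)
qed




lemma hn_upper:
  assumes "f \<in> Hinf a" "z \<in> unit_disk"
  shows "weight a z * norm (f z) \<le> Hinf_norm a f"
proof -
  from assms(1) obtain C where C: "\<forall>z\<in>unit_disk. weight a z * norm (f z) \<le> C"
    unfolding Hinf_def by auto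
  have "bdd_above ((\<lambda>z. weight a z * norm (f z)) ` unit_disk)"
    using C by (intro bdd_aboveI2) auto
  then show ?thesis unfolding Hinf_norm_def using assms(2) by (rule cSUP_upper2) simp
qed

lemma hn_least:
  assumes "\<And>z. z \<in> unit_disk \<Longrightarrow> weight a z * norm (f z) \<le> B"
  shows "Hinf_norm a f \<le> B"
  unfolding Hinf_norm_def using assms by (intro cSUP_least) auto

lemma S_deriv:
  assumes f: "f holomorphic_on unit_disk" and g: "g holomorphic_on unit_disk" and w: "w \<in> unit_disk"
  shows "(S_op g f has_field_derivative deriv f w * g w) (at w)"
proof -
  have "(\<lambda>w. deriv f w * g w) holomorphic_on unit_disk"
    using f g by (intro holomorphic_on_mult holomorphic_deriv) auto
  from prim[OF this w] show ?thesis unfolding S_op_def[abs_def] by simp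
qed

lemma S_holo:
  assumes f: "f holomorphic_on unit_disk" and g: "g holomorphic_on unit_disk"
  shows "S_op g f holomorphic_on unit_disk"
  using S_deriv[OF f g] unfolding holomorphic_on_open[OF open_ball] by blast

theorem theorem3:
  fixes g :: "complex \<Rightarrow> complex" and \<alpha> \<beta> :: real
  assumes "g holomorphic_on unit_disk" and "\<alpha> \<ge> 0" and "\<beta> > 0"
  shows "S_bounded g \<alpha> \<beta> \<longleftrightarrow>
    (\<exists>C. \<forall>z\<in>unit_disk. (1 - (norm z)^2) powr (\<beta> - \<alpha>) * norm (g z) \<le> C)"
proof
  assume "S_bounded g \<alpha> \<beta>"
  then obtain C where C: "\<And>f. f \<in> Hinf \<alpha> \<Longrightarrow> S_op g f \<in> Hinf \<beta> \<and> Hinf_norm \<beta> (S_op g f) \<le> C * Hinf_norm \<alpha> f"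
    unfolding S_bounded_def by blast
  show "\<exists>C. \<forall>z\<in>unit_disk. (1 - (norm z)^2) powr (\<beta> - \<alpha>) * norm (g z) \<le> C"
  proof (intro exI ballI)
    fix a assume aD: "a \<in> unit_disk"
    then have a1: "norm a < 1" by simp
    define p where "p = - (complex_of_real \<alpha> + 1)"
    define fa where "fa = (\<lambda>z. (a - z) * (1 - cnj a * z) powr p)"
    have fad: "(fa has_field_derivative
        (- ((1 - cnj a * z) powr p) + (a - z) * (p * (1 - cnj a * z) powr (p - 1) * (- cnj a)))) (at z)"
      if "z \<in> unit_disk" for z
      unfolding fa_def using tf_deriv[OF a1, of z p] that by simp
    have faH: "fa holomorphic_on unit_disk"
      using fad unfolding holomorphic_on_open[OF open_ball] by blast
    have fab: "weight \<alpha> z * norm (fa z) \<le> 2 powr \<alpha>" if "z \<in> unit_disk" for z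
      unfolding fa_def p_def using tf_bound[OF assms(2) a1, of z] that by simp
    have faI: "fa \<in> Hinf \<alpha>" unfolding Hinf_def using faH fab by blast
    have n0: "0 \<le> Hinf_norm \<alpha> fa"
      using hn_upper[OF faI, of 0] by (simp add: weight_def) (meson norm_ge_zero order_trans)
    have n1: "Hinf_norm \<alpha> fa \<le> 2 powr \<alpha>" using fab by (rule hn_least)
    define F where "F = S_op g fa"
    have FI: "F \<in> Hinf \<beta>" and Fn: "Hinf_norm \<beta> F \<le> C * Hinf_norm \<alpha> fa"
      using C[OF faI] by (auto simp: F_def)
    have "C * Hinf_norm \<alpha> fa \<le> \<bar>C\<bar> * 2 powr \<alpha>"
      using n0 n1 by (smt (verit) mult_mono abs_ge_self abs_ge_zero)
    then have FM: "\<forall>z\<in>unit_disk. weight \<beta> z * norm (F z) \<le> \<bar>C\<bar> * 2 powr \<alpha>"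
      using hn_upper[OF FI] Fn by (meson order_trans)
    have FH: "F holomorphic_on unit_disk" unfolding F_def by (rule S_holo[OF faH assms(1)])
    have est: "(1 - norm a ^ 2) powr (\<beta>+1) * norm (deriv F a) \<le> 4 powr (\<beta>+1) * (\<bar>C\<bar> * 2 powr \<alpha>)"
      by (rule deriv_est[OF FH _ FM aD]) (use assms(3) in auto)
    have dF: "deriv F a = deriv fa a * g a"
      unfolding F_def by (rule DERIV_imp_deriv[OF S_deriv[OF faH assms(1) aD]])
    have u: "1 - cnj a * a = complex_of_real (1 - norm a ^ 2)"
      using complex_norm_square[of a] by (simp add: mult.commute)
    have pos: "0 < 1 - norm a ^ 2" using a1 by (simp add: power_less_one_iff abs_square_less_1)
    have dfa: "deriv fa a = - ((1 - cnj a * a) powr p)"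
      using DERIV_imp_deriv[OF fad[OF aD]] by simp
    have nu: "norm (1 - cnj a * a) = 1 - norm a ^ 2"
      unfolding u norm_of_real using pos by simp
    have "norm (deriv fa a) = norm (1 - cnj a * a) powr Re p"
      unfolding dfa norm_minus_cancel by (rule norm_powr_real_powr') (simp add: p_def)
    then have "norm (deriv fa a) = (1 - norm a ^ 2) powr (-(\<alpha>+1))"
      unfolding nu by (simp add: p_def)
    then have "norm (deriv F a) = (1 - norm a ^ 2) powr (-(\<alpha>+1)) * norm (g a)"
      unfolding dF norm_mult by simp
    moreover have "(1 - norm a ^ 2) powr (\<beta>+1) * (1 - norm a ^ 2) powr (-(\<alpha>+1)) = (1 - norm a ^ 2) powr (\<beta> - \<alpha>)"
      by (simp add: powr_add[symmetric])
    ultimately show "(1 - (norm a)^2) powr (\<beta> - \<alpha>) * norm (g a) \<le> 4 powr (\<beta>+1) * (\<bar>C\<bar> * 2 powr \<alpha>)"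
      using est by (metis mult.assoc)
  qed
next
  assume "\<exists>C. \<forall>z\<in>unit_disk. (1 - (norm z)^2) powr (\<beta> - \<alpha>) * norm (g z) \<le> C"
  then obtain K where K: "\<And>z. z \<in> unit_disk \<Longrightarrow> (1 - (norm z)^2) powr (\<beta> - \<alpha>) * norm (g z) \<le> K"
    by blast
  have K0: "0 \<le> K" using K[of 0] by simp (meson norm_ge_zero order_trans)
  show "S_bounded g \<alpha> \<beta>"
    unfolding S_bounded_def
  proof (intro exI ballI)
    fix f assume fI: "f \<in> Hinf \<alpha>"
    define M where "M = Hinf_norm \<alpha> f"
    have fH: "f holomorphic_on unit_disk" using fI by (simp add: Hinf_def)
    have fM: "\<forall>z\<in>unit_disk. weight \<alpha> z * norm (f z) \<le> M" using hn_upper[OF fI] by (simp add: M_def)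
    have M0: "0 \<le> M" using fM[rule_format, of 0] by (simp add: weight_def) (meson norm_ge_zero order_trans)
    define F where "F = S_op g f"
    define C0 where "C0 = 4 powr (\<alpha>+1) * M * K"
    have hb: "(1 - norm w) powr (\<beta>+1) * norm (deriv f w * g w) \<le> C0" if w: "w \<in> unit_disk" for w
    proof -
      have w1: "norm w < 1" using w by simp
      have pos: "0 < 1 - norm w ^ 2" using w1 by (simp add: power_less_one_iff abs_square_less_1)
      have e1: "(1 - norm w ^ 2) powr (\<alpha>+1) * norm (deriv f w) \<le> 4 powr (\<alpha>+1) * M"
        by (rule deriv_est[OF fH _ fM w]) (use assms(2) in auto)
      have e2: "(1 - norm w ^ 2) powr (\<beta> - \<alpha>) * norm (g w) \<le> K" using K[OF w] by simp
      have "((1 - norm w ^ 2) powr (\<alpha>+1) * norm (deriv f w)) * ((1 - norm w ^ 2) powr (\<beta> - \<alpha>) * norm (g w))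
            \<le> (4 powr (\<alpha>+1) * M) * K"
        by (rule mult_mono[OF e1 e2]) (use M0 in auto)
      moreover have "((1 - norm w ^ 2) powr (\<alpha>+1) * norm (deriv f w)) * ((1 - norm w ^ 2) powr (\<beta> - \<alpha>) * norm (g w))
           = (1 - norm w ^ 2) powr (\<beta>+1) * norm (deriv f w * g w)"
        by (simp add: norm_mult powr_add[symmetric] mult_ac)
      moreover have "(1 - norm w) powr (\<beta>+1) \<le> (1 - norm w ^ 2) powr (\<beta>+1)"
      proof (rule powr_mono2)
        have "norm w * norm w \<le> 1 * norm w" using w1 by (intro mult_right_mono) auto
        then show "1 - norm w \<le> 1 - norm w ^ 2" by (simp add: power2_eq_square)
      qed (use assms(3) w1 in auto)
      ultimately show ?thesis unfolding C0_def
        by (smt (verit) mult_right_mono norm_ge_zero)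
    qed
    have gr: "norm (F z) \<le> C0 / \<beta> * (1 - norm z) powr (-\<beta>)" if z: "z \<in> unit_disk" for z
      unfolding F_def
      by (rule growth[OF _ S_deriv[OF fH assms(1)] hb assms(3) z]) (simp add: S_op_def)
    have fb: "weight \<beta> z * norm (F z) \<le> 4 powr (\<alpha> + 1) * K * 2 powr \<beta> / \<beta> * M"
      if z: "z \<in> unit_disk" for z
    proof -
      have z1: "norm z < 1" using z by simp
      have p: "0 < 1 - norm z" using z1 by simp
      have "0 \<le> (norm z - 1)^2" by simp
      moreover have "(norm z - 1)^2 = norm z^2 + 1 - 2 * norm z" by (simp add: power2_diff)
      ultimately have "1 - norm z ^ 2 \<le> 2 - 2 * norm z" by linarith
      then have "1 - norm z ^ 2 \<le> 2 * (1 - norm z)" by (simp add: algebra_simps)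
      then have wz: "weight \<beta> z \<le> (2 * (1 - norm z)) powr \<beta>"
        unfolding weight_def using z1 assms(3) by (intro powr_mono2) (auto simp: power_le_one)
      have "weight \<beta> z * norm (F z) \<le> (2 * (1 - norm z)) powr \<beta> * (C0 / \<beta> * (1 - norm z) powr (-\<beta>))"
        using wz gr[OF z] by (intro mult_mono) (auto simp: weight_def)
      also have "\<dots> = 2 powr \<beta> * C0 / \<beta>"
      proof -
        have pm: "(2 * (1 - norm z)) powr \<beta> = 2 powr \<beta> * (1 - norm z) powr \<beta>"
          using p by (meson powr_mult less_imp_le zero_le_numeral)
        have "(1 - norm z) powr \<beta> * (1 - norm z) powr (-\<beta>) = 1"
          using p by (simp add: powr_minus)
        then show ?thesis unfolding pm by (simp add: field_simps)
      qed
      finally show ?thesis by (simp add: C0_def field_simps)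
    qed
    have FH: "F holomorphic_on unit_disk" unfolding F_def by (rule S_holo[OF fH assms(1)])
    show "S_op g f \<in> Hinf \<beta> \<and> Hinf_norm \<beta> (S_op g f) \<le> 4 powr (\<alpha> + 1) * K * 2 powr \<beta> / \<beta> * Hinf_norm \<alpha> f"
      using FH fb hn_least[of \<beta> F] unfolding F_def M_def Hinf_def by blast
  qed
qed


end
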